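(* Let $n\in\mathbb{N}$ with $n>500$, let $n_1,n_2,n_3,n_4$ be nonnegative integers with $\sum_{i=1}^4n_i=n$, and let $\lambda_i=\frac{n_i}{n}$ for $i=1,\dots,4$. Then \[ \frac{n!}{n_1!\,n_2!\,n_3!\,n_4!}\prod_{i=1}^4\lambda_i^{n_i}>\frac{1}{n^2}. \]
   Context: The convention $0^0=1$ is used. *)

theory Defs
  imports Complex_Main
begin

end

theory Submission
  imports Defs
begin

lemma ln_lower: fixes x :: real assumes "x \<ge> 0" shows "2*x/(2+x) \<le> ln (1+x)"
proof -
  have "(\<lambda>t. ln (1+t) - 2*t/(2+t)) 0 \<le> (\<lambda>t. ln (1+t) - 2*t/(2+t)) x"
  proof (rule DERIV_nonneg_imp_nondecreasing[OF assms])
    fix t :: real assume t: "0 \<le> t" "t \<le> x"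
    have "DERIV (\<lambda>t. ln (1+t) - 2*t/(2+t)) t :> (1/(1+t) - (2*(2+t) - 2*t)/(2+t)^2)"
      using t by (auto intro!: derivative_eq_intros simp: power2_eq_square)
    moreover have "1/(1+t) - (2*(2+t) - 2*t)/(2+t)^2 = t^2/((1+t)*(2+t)^2)"
      proof -
      have d: "1+t \<noteq> 0" "2+t \<noteq> 0" using t by auto
      show ?thesis using d by (simp add: divide_simps) (simp add: algebra_simps power2_eq_square)
    qed
    moreover have "t^2/((1+t)*(2+t)^2) \<ge> 0" using t by simp
    ultimately show "\<exists>y. DERIV (\<lambda>t. ln (1+t) - 2*t/(2+t)) t :> y \<and> y \<ge> 0" by auto
  qed
  thus ?thesis by simp
qed

lemma ln_upper: fixes x :: real assumes "x \<ge> 0" shows "ln (1+x) \<le> x*(2+x)/(2*(1+x))"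
proof -
  have "(\<lambda>t. t*(2+t)/(2*(1+t)) - ln (1+t)) 0 \<le> (\<lambda>t. t*(2+t)/(2*(1+t)) - ln (1+t)) x"
  proof (rule DERIV_nonneg_imp_nondecreasing[OF assms])
    fix t :: real assume t: "0 \<le> t" "t \<le> x"
    have "DERIV (\<lambda>t. t*(2+t)/(2*(1+t)) - ln (1+t)) t :> (((2+2*t)*(2*(1+t)) - t*(2+t)*2)/(2*(1+t))^2 - 1/(1+t))"
      using t by (auto intro!: derivative_eq_intros simp: power2_eq_square)
    moreover have "((2+2*t)*(2*(1+t)) - t*(2+t)*2)/(2*(1+t))^2 - 1/(1+t) = t^2/(2*(1+t)^2)"
      proof -
      have d: "1+t \<noteq> 0" "2+t \<noteq> 0" using t by auto
      show ?thesis using d by (simp add: divide_simps) (simp add: algebra_simps power2_eq_square)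
    qed
    moreover have "t^2/(2*(1+t)^2) \<ge> 0" using t by simp
    ultimately show "\<exists>y. DERIV (\<lambda>t. t*(2+t)/(2*(1+t)) - ln (1+t)) t :> y \<and> y \<ge> 0" by auto
  qed
  thus ?thesis by simp
qed

lemma ln_step: fixes m :: nat assumes "m \<ge> 1"
  shows "1 \<le> (m+1/2) * (ln (m+1) - ln m)" and "(m+1/2) * (ln (m+1) - ln m) \<le> 1 + 1/(4*m) - 1/(4*(m+1))"
proof -
  have mp: "real m > 0" using assms by simp
  have eq: "ln (real (m+1)) - ln m = ln (1 + 1/m)"
    proof -
    have "1 + 1/real m = (real m+1)/m" using mp by (simp add: field_simps)
    thus ?thesis using mp by (simp add: ln_div add.commute)
  qed
  have "2*(1/m)/(2+1/m) \<le> ln (1+1/m)" by (rule ln_lower) simp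
  moreover have "2*(1/m)/(2+1/m) = 1/(m+1/2)" using mp by (simp add: field_simps)
  ultimately have "1/(m+1/2) \<le> ln (real (m+1)) - ln m" using eq by simp
  thus "1 \<le> (m+1/2) * (ln (m+1) - ln m)" using mp by (simp add: field_simps)
  have "ln (1+1/m) \<le> (1/m)*(2+1/m)/(2*(1+1/m))" by (rule ln_upper) simp
  hence "(m+1/2) * (ln (m+1) - ln m) \<le> (m+1/2) * ((1/m)*(2+1/m)/(2*(1+1/m)))"
    using eq mp by (intro mult_left_mono) auto
  also have "\<dots> = 1 + 1/(4*m) - 1/(4*(m+1))"
  proof -
    have d: "real m \<noteq> 0" "real m + 1 \<noteq> 0" using mp by auto
    show ?thesis using d by (simp add: divide_simps) (simp add: algebra_simps power2_eq_square)
  qed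
  finally show "(m+1/2) * (ln (m+1) - ln m) \<le> 1 + 1/(4*m) - 1/(4*(m+1))" .
qed

lemma fact_ln_bounds: fixes m :: nat assumes "m \<ge> 1"
  shows "ln (fact m) \<le> 1 + (m + 1/2) * ln m - m \<and> 3/4 + 1/(4*m) + (m+1/2) * ln m - m \<le> ln (fact m)"
  using assms
proof (induction m rule: nat_induct_at_least)
  case base then show ?case by simp
next
  case (Suc m)
  have f: "ln (fact (Suc m) :: real) = ln (real m + 1) + ln (fact m)"
  proof -
    have "(fact (Suc m) :: real) = (real m + 1) * fact m" by (simp add: algebra_simps)
    thus ?thesis by (simp add: ln_mult)
  qed
  note s = ln_step[OF Suc.hyps]
  show ?case using Suc.IH s unfolding f by (simp add: algebra_simps)
qed

lemma fact_upper: fixes m :: nat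
  shows "fact m * exp (real m) \<le> exp 1 * sqrt (real m + 1) * real m ^ m"
proof (cases "m = 0")
  case True then show ?thesis by simp
next
  case False
  hence m1: "m \<ge> 1" and mp: "real m > 0" by auto
  have "fact m = exp (ln (fact m :: real))" by simp
  also have "\<dots> \<le> exp (1 + (m + 1/2) * ln m - m)"
    by (rule exp_le_cancel_iff[THEN iffD2]) (use fact_ln_bounds[OF m1] in linarith)
  also have "\<dots> = exp 1 * exp (real m * ln m) * exp (1/2 * ln m) / exp m"
    by (simp add: exp_add exp_diff algebra_simps)
  also have "exp (real m * ln m) = real m ^ m" using mp by (simp add: exp_of_nat_mult)
  also have "exp (1/2 * ln m) = sqrt (real m)" using mp by (simp add: powr_half_sqrt[symmetric] powr_def)
  finally have "fact m \<le> exp 1 * real m ^ m * sqrt (real m) / exp m" .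
  hence "fact m * exp m \<le> exp 1 * real m ^ m * sqrt (real m)" by (simp add: field_simps)
  also have "\<dots> \<le> exp 1 * real m ^ m * sqrt (real m + 1)"
    by (intro mult_left_mono) auto
  finally show ?thesis by (simp add: algebra_simps)
qed

lemma fact_lower: fixes m :: nat assumes m1: "m \<ge> 1"
  shows "sqrt (real m) * real m ^ m \<le> fact m * exp (real m)"
proof -
  have mp: "real m > 0" using m1 by auto
  have "exp 1 * real m ^ m * sqrt (real m) / exp m = exp (1 + (m + 1/2) * ln m - m)"
  proof -
    have "exp (1 + (m + 1/2) * ln m - m) = exp 1 * exp (real m * ln m) * exp (1/2 * ln m) / exp m"
      by (simp add: exp_add exp_diff algebra_simps)
    also have "exp (real m * ln m) = real m ^ m" using mp by (simp add: exp_of_nat_mult)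
    also have "exp (1/2 * ln m) = sqrt (real m)" using mp by (simp add: powr_half_sqrt[symmetric] powr_def)
    finally show ?thesis by simp
  qed
  hence "real m ^ m * sqrt (real m) / exp m = exp ((m + 1/2) * ln m - m)"
    by (simp add: exp_add exp_diff)
  also have "\<dots> \<le> exp (ln (fact m :: real))"
    by (rule exp_le_cancel_iff[THEN iffD2]) (use fact_ln_bounds[OF m1] mp in \<open>smt (verit) divide_nonneg_nonneg of_nat_0_le_iff\<close>)
  also have "\<dots> = fact m" by simp
  finally show ?thesis by (simp add: field_simps)
qed

lemma amgm4: fixes x y z w :: real assumes "x \<ge> 0" "y \<ge> 0" "z \<ge> 0" "w \<ge> 0"
  shows "x*y*z*w \<le> ((x+y+z+w)/4)^4"
proof -
  have a: "x*y \<le> ((x+y)/2)^2" using zero_le_square[of "x-y"] by (simp add: power2_eq_square field_simps algebra_simps)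
  have b: "z*w \<le> ((z+w)/2)^2" using zero_le_square[of "z-w"] by (simp add: power2_eq_square field_simps algebra_simps)
  have c: "((x+y)/2) * ((z+w)/2) \<le> ((x+y+z+w)/4)^2" using zero_le_square[of "x+y-z-w"] by (simp add: power2_eq_square field_simps algebra_simps)
  have "x*y*z*w = (x*y)*(z*w)" by simp
  also have "\<dots> \<le> ((x+y)/2)^2 * ((z+w)/2)^2" using a b assms by (intro mult_mono) auto
  also have "\<dots> = (((x+y)/2) * ((z+w)/2))^2" by (simp only: power_mult_distrib)
  also have "\<dots> \<le> (((x+y+z+w)/4)^2)^2" using c assms by (intro power_mono) auto
  finally show ?thesis by simp
qed

lemma pow_self_pos: "0 < real k ^ k"
  by (cases k) auto

theorem lemma7:
  fixes n n1 n2 n3 n4 :: nat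
  assumes "n > 500"
    and "n1 + n2 + n3 + n4 = n"
  shows "fact n / (fact n1 * fact n2 * fact n3 * fact n4) *
           ((real n1 / real n) ^ n1 * (real n2 / real n) ^ n2 *
            (real n3 / real n) ^ n3 * (real n4 / real n) ^ n4)
         > 1 / (real n)^2"
proof -
  define N where "N = real n"
  define A where "A = real n1 ^ n1 * real n2 ^ n2 * real n3 ^ n3 * real n4 ^ n4"
  define S where "S = sqrt (real n1 + 1) * sqrt (real n2 + 1) * sqrt (real n3 + 1) * sqrt (real n4 + 1)"
  define P :: real where "P = fact n1 * fact n2 * fact n3 * fact n4"
  define T where "T = fact n / (fact n1 * fact n2 * fact n3 * fact n4) *
           ((real n1 / real n) ^ n1 * (real n2 / real n) ^ n2 *
            (real n3 / real n) ^ n3 * (real n4 / real n) ^ n4)"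
  have N500: "N > 500" using assms(1) unfolding N_def by simp
  have Apos: "A > 0" unfolding A_def using pow_self_pos by (simp add: mult_pos_pos)
  have Ppos: "P > 0" unfolding P_def by simp
  have Spos: "S > 0" unfolding S_def by simp
  have NnN: "N ^ n = N^n1 * N^n2 * N^n3 * N^n4" using assms(2) by (simp add: power_add[symmetric])
  have Teq: "T = fact n / P * (A / N ^ n)"
    unfolding T_def P_def A_def N_def NnN[unfolded N_def] by (simp add: power_divide)
  have expN: "exp N = exp (real n1) * exp (real n2) * exp (real n3) * exp (real n4)"
    using assms(2) unfolding N_def by (simp add: exp_add[symmetric])
  have hP: "P * exp N \<le> exp 1 ^ 4 * S * A"
  proof -
    have "P * exp N = (fact n1 * exp (real n1)) * (fact n2 * exp (real n2)) * (fact n3 * exp (real n3)) * (fact n4 * exp (real n4))"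
      unfolding P_def expN by (simp add: algebra_simps)
    also have "\<dots> \<le> (exp 1 * sqrt (real n1 + 1) * real n1 ^ n1) * (exp 1 * sqrt (real n2 + 1) * real n2 ^ n2) * (exp 1 * sqrt (real n3 + 1) * real n3 ^ n3) * (exp 1 * sqrt (real n4 + 1) * real n4 ^ n4)"
      by (intro mult_mono fact_upper) auto
    also have "\<dots> = exp 1 ^ 4 * S * A" unfolding S_def A_def by (simp add: algebra_simps power4_eq_xxxx)
    finally show ?thesis .
  qed
  have hn: "sqrt N * N ^ n \<le> fact n * exp N" unfolding N_def using assms(1) by (intro fact_lower) auto
  have "T * P * exp N * N ^ n = fact n * exp N * A" unfolding Teq using Ppos N500 by (simp add: field_simps)
  also have "\<dots> \<ge> sqrt N * N ^ n * A" using hn Apos by (intro mult_right_mono) auto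
  finally have h1: "sqrt N * N ^ n * A \<le> T * (P * exp N) * N ^ n" by (simp add: algebra_simps)
  have Tpos: "T \<ge> 0" unfolding Teq using Ppos Apos N500 by simp
  have "T * (P * exp N) * N ^ n \<le> T * (exp 1 ^ 4 * S * A) * N ^ n"
    using hP Tpos N500 by (intro mult_right_mono mult_left_mono) auto
  with h1 have "sqrt N * N ^ n * A \<le> (T * exp 1 ^ 4 * S) * (N ^ n * A)" by (simp add: algebra_simps)
  hence h2: "sqrt N \<le> T * exp 1 ^ 4 * S" using Apos N500 by (simp add: algebra_simps)
  have hS: "S \<le> ((N+4)/4)^2"
  proof -
    have "S = sqrt ((real n1 + 1) * (real n2 + 1) * (real n3 + 1) * (real n4 + 1))"
      unfolding S_def by (simp add: real_sqrt_mult)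
    also have "\<dots> \<le> sqrt ((((real n1 + 1) + (real n2 + 1) + (real n3 + 1) + (real n4 + 1))/4)^4)"
      by (intro real_sqrt_le_mono amgm4) auto
    also have "((real n1 + 1) + (real n2 + 1) + (real n3 + 1) + (real n4 + 1)) = N + 4"
      unfolding N_def using assms(2) by simp
    also have "sqrt (((N+4)/4)^4) = ((N+4)/4)^2"
      by (metis (no_types) numeral_Bit0 power_mult real_sqrt_abs abs_power2 power2_eq_square mult_2 numeral_One one_add_one)
    finally show ?thesis .
  qed
  have he: "exp 1 ^ 4 \<le> (81::real)"
  proof -
    have "exp 1 ^ 4 \<le> (3::real) ^ 4" by (intro power_mono exp_le) auto
    thus ?thesis by simp
  qed
  have s22: "sqrt N \<ge> 22" by (rule real_le_rsqrt) (use N500 in simp)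
  have "22 \<le> T * exp 1 ^ 4 * S" using h2 s22 by simp
  also have "\<dots> \<le> T * 81 * ((N+4)/4)^2"
    using Tpos he hS Spos by (intro mult_mono) auto
  finally have h3: "22 * 16 \<le> T * (81 * (N+4)^2)" by (simp add: power_divide algebra_simps)
  have nn: "500 * N \<le> N * N" using N500 by (intro mult_right_mono) auto
  have h4: "81 * (N+4)^2 < 22 * 16 * N^2"
  proof -
    have "81 * (N+4)^2 = 81 * (N*N) + 648 * N + 1296" by (simp add: power2_eq_square algebra_simps)
    moreover have "22 * 16 * N^2 = 352 * (N*N)" by (simp add: power2_eq_square)
    ultimately show ?thesis using nn N500 by linarith
  qed
  define K where "K = 81 * (N+4)^2"
  have Kpos: "K > 0" unfolding K_def using N500 by simp
  have "352 / K \<le> T" using h3 Kpos unfolding K_def[symmetric] by (simp add: pos_divide_le_eq mult.commute)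
  moreover have "1 / N^2 < 352 / K" using h4 Kpos N500 unfolding K_def[symmetric] by (simp add: divide_simps)
  ultimately have "1 / N^2 < T" by linarith
  thus ?thesis unfolding T_def N_def .
qed

end
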